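(* Let $\Omega=(x_l,x_r)\times(x_b,x_t)\subset\mathbb{R}^2$, $T>0$, and let $u:\overline{\Omega}\times[0,T]\to\mathbb{C}$ be such that $u$, $\partial_t u$ and all spatial partial derivatives of $u$ up to order $2$ are continuous on $\overline{\Omega}\times[0,T]$, $u(\mathbf{x},0)=0$ for all $\mathbf{x}\in\partial\Omega$, and $i\partial_t u+\partial_{x_1}^2u+\partial_{x_2}^2u=0$ on $\overline{\Omega}\times(0,T]$. Suppose that on each closed edge the high-frequency boundary condition holds: $$\partial_n u+e^{-i\pi/4}\partial_t^{1/2}u-\tfrac12 e^{i\pi/4}\,\partial_{x_2}^2\partial_t^{-1/2}u=0\ \text{ on }\overline{\Gamma_l}\cup\overline{\Gamma_r},\qquad \partial_n u+e^{-i\pi/4}\partial_t^{1/2}u-\tfrac12 e^{i\pi/4}\,\partial_{x_1}^2\partial_t^{-1/2}u=0\ \text{ on }\overline{\Gamma_b}\cup\overline{\Gamma_t},$$ for $t\in(0,T]$. Then at each corner $c=\overline{\Gamma_a}\cap\overline{\Gamma_{a'}}$ (with $a\in\{l,r\}$, $a'\in\{b,t\}$) one has, for $t\in(0,T]$, $$\partial_{n_a}u(c,t)+\partial_{n_{a'}}u(c,t)+\tfrac{3}{2}e^{-i\pi/4}\,\partial_t^{1/2}u(c,t)=0,$$ where $\partial_{n_a}$ and $\partial_{n_{a'}}$ are the outward normal derivatives of the two edges meeting at $c$.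
   Context: Edges: $\Gamma_l=\{x_l\}\times(x_b,x_t)$, $\Gamma_r=\{x_r\}\times(x_b,x_t)$, $\Gamma_b=(x_l,x_r)\times\{x_b\}$, $\Gamma_t=(x_l,x_r)\times\{x_t\}$; $\partial_n$ is the outward normal derivative (so $\partial_n=\partial_{x_1}$ on $\Gamma_r$, $-\partial_{x_1}$ on $\Gamma_l$, $\partial_{x_2}$ on $\Gamma_t$, $-\partial_{x_2}$ on $\Gamma_b$), extended by continuity to the closed edges. Fractional operators in time (acting pointwise in $\mathbf{x}$): $\partial_t^{-1/2}f(t)=\frac{1}{\sqrt\pi}\int_0^t\frac{f(s)}{\sqrt{t-s}}\,ds$ and $\partial_t^{1/2}f=\frac{d}{dt}\,\partial_t^{-1/2}f$. *)

theory Defs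
  imports "HOL-Analysis.Analysis"
begin

definition frac_int_half :: "(real \<Rightarrow> complex) \<Rightarrow> real \<Rightarrow> complex" where
  "frac_int_half f t = (1 / sqrt pi) *\<^sub>R integral {0..t} (\<lambda>s. f s /\<^sub>R sqrt (t - s))"

definition frac_deriv_half :: "real \<Rightarrow> (real \<Rightarrow> complex) \<Rightarrow> real \<Rightarrow> complex" where
  "frac_deriv_half T f t = vector_derivative (frac_int_half f) (at t within {0..T})"

definition d2_within :: "real set \<Rightarrow> (real \<Rightarrow> complex) \<Rightarrow> real \<Rightarrow> complex" where
  "d2_within S g y =
     vector_derivative (\<lambda>z. vector_derivative g (at z within S)) (at y within S)"

end

theory Submission
  imports Defs
begin


lemma rep:
  fixes f :: "real \<Rightarrow> complex" and t :: real
  assumes t: "t > 0" and cf: "continuous_on {0..t} f"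
  shows "frac_int_half f t = (2 * sqrt t / sqrt pi) *\<^sub>R integral {0..1} (\<lambda>w. f (t * (1 - w\<^sup>2)))"
proof -
  define g where "g s = sqrt (t - s) / sqrt t" for s
  define g' where "g' s = - (1 / (2 * sqrt (t - s))) / sqrt t" for s
  define h where "h w = (2 * sqrt t) *\<^sub>R f (t * (1 - w\<^sup>2))" for w
  have ch: "continuous_on {0..1} h"
    unfolding h_def
  proof (intro continuous_intros continuous_on_compose2[OF cf])
    show "(\<lambda>x. t * (1 - x\<^sup>2)) ` {0..1} \<subseteq> {0..t}"
      using t by (auto simp: power_le_one mult_le_cancel_left1)
  qed
  have sub: "((\<lambda>s. g' s *\<^sub>R h (g s)) has_integral (integral {g 0..g t} h - integral {g t..g 0} h)) {0..t}"
  proof (rule has_integral_substitution_general[where s="{t}" and c=0 and d=1])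
    show "g ` {0..t} \<subseteq> {0..1}"
      using t by (auto simp: g_def real_sqrt_le_iff divide_le_eq_1)
    show "continuous_on {0..t} g" unfolding g_def using t by (intro continuous_intros) auto
    fix x assume x: "x \<in> {0..t} - {t}"
    then have "x < t" by auto
    show "(g has_field_derivative g' x) (at x within {0..t})"
      unfolding g_def g'_def using \<open>x < t\<close> t
      by (auto intro!: derivative_eq_intros simp: field_simps)
  qed (use t ch in auto)
  have g0: "g 0 = 1" "g t = 0" using t by (auto simp: g_def)
  have eq: "g' s *\<^sub>R h (g s) = - (f s /\<^sub>R sqrt (t - s))" if s: "s \<in> {0..t}" for s
  proof (cases "s = t")
    case True then show ?thesis by (simp add: g'_def g_def)
  next
    case False
    with s have st: "s < t" by auto
    have "(g s)\<^sup>2 = (t - s) / t" using st t by (simp add: g_def power_divide)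
    then have "t * (1 - (g s)\<^sup>2) = s" using t by (simp add: field_simps)
    then have "h (g s) = (2 * sqrt t) *\<^sub>R f s" by (simp add: h_def)
    then show ?thesis using st t by (simp add: g'_def field_simps)
  qed
  have "((\<lambda>s. f s /\<^sub>R sqrt (t - s)) has_integral integral {0..1} h) {0..t}"
  proof -
    have "((\<lambda>s. - (g' s *\<^sub>R h (g s))) has_integral integral {0..1} h) {0..t}"
      using has_integral_neg[OF sub] g0 by simp
    then show ?thesis
      by (rule has_integral_eq[rotated]) (simp add: eq)
  qed
  then have "integral {0..t} (\<lambda>s. f s /\<^sub>R sqrt (t - s)) = integral {0..1} h"
    by (rule integral_unique)
  moreover have "integral {0..1} h = (2 * sqrt t) *\<^sub>R integral {0..1} (\<lambda>w. f (t * (1 - w\<^sup>2)))"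
    unfolding h_def by (rule integral_cmul)
  ultimately show ?thesis
    by (simp add: frac_int_half_def)
qed
lemma chain_within:
  fixes v :: "real \<Rightarrow> complex"
  assumes "(v has_vector_derivative v') (at (g x) within S)"
    and "(g has_real_derivative g') (at x within A)" and "g ` A \<subseteq> S"
  shows "((\<lambda>y. v (g y)) has_vector_derivative g' *\<^sub>R v') (at x within A)"
proof -
  have "(g has_vector_derivative g') (at x within A)"
    using assms(2) by (simp add: has_real_derivative_iff_has_vector_derivative)
  moreover have "(v has_vector_derivative v') (at (g x) within g ` A)"
    using has_vector_derivative_within_subset[OF assms(1) assms(3)] .
  ultimately show ?thesis using vector_diff_chain_within[of g g' x A v v'] by (simp add: o_def)
qed

lemma img01: "(t::real) \<ge> 0 \<Longrightarrow> t \<le> T \<Longrightarrow> (\<lambda>w. t * (1 - w\<^sup>2)) ` {0..1} \<subseteq> {0..T}"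
proof clarify
  fix w :: real assume a: "0 \<le> t" "t \<le> T" "w \<in> {0..1}"
  then have "0 \<le> w\<^sup>2" "w\<^sup>2 \<le> 1" by (auto simp: power_le_one)
  moreover have "0 \<le> t * w\<^sup>2" using a by simp
  moreover have "t * w\<^sup>2 \<le> t * 1" using a \<open>w\<^sup>2 \<le> 1\<close> by (intro mult_left_mono) auto
  ultimately have "0 \<le> t * (1 - w\<^sup>2)" "t * (1 - w\<^sup>2) \<le> t" using a
    by (auto simp: right_diff_distrib)
  then show "t * (1 - w\<^sup>2) \<in> {0..T}" using a by auto
qed

lemma cont01:
  fixes f :: "real \<Rightarrow> complex"
  assumes "continuous_on {0..T} f" "0 \<le> t" "t \<le> T"
  shows "continuous_on {0..1} (\<lambda>w. f (t * (1 - w\<^sup>2)))"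
  by (rule continuous_on_compose2[OF assms(1)]) (use img01[OF assms(2,3)] in \<open>auto intro!: continuous_intros\<close>)

lemma timeder:
  fixes v v' :: "real \<Rightarrow> complex" and T t :: real
  assumes T: "T > 0"
    and dv: "\<And>s. s \<in> {0..T} \<Longrightarrow> (v has_vector_derivative v' s) (at s within {0..T})"
    and cv': "continuous_on {0..T} v'" and v0: "v 0 = 0" and t: "t \<in> {0<..T}"
  shows "frac_deriv_half T v t = frac_int_half v' t"
proof -
  have t0: "0 < t" "t \<le> T" using t by auto
  have cv: "continuous_on {0..T} v" using dv by (rule continuous_on_vector_derivative)
  define K where "K \<tau> = integral {0..1} (\<lambda>w. v (\<tau> * (1 - w\<^sup>2)))" for \<tau>
  have repall: "frac_int_half v \<tau> = (2 * sqrt \<tau> / sqrt pi) *\<^sub>R K \<tau>" if "\<tau> \<in> {0..T}" for \<tau>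
  proof (cases "\<tau> = 0")
    case True then show ?thesis by (simp add: frac_int_half_def)
  next
    case False
    with that have "\<tau> > 0" by auto
    moreover have "continuous_on {0..\<tau>} v" using continuous_on_subset[OF cv] that by auto
    ultimately show ?thesis unfolding K_def by (rule rep)
  qed
  define A where "A = integral {0..1} (\<lambda>w. v' (t * (1 - w\<^sup>2)))"
  define B where "B = integral {0..1} (\<lambda>w. w\<^sup>2 *\<^sub>R v' (t * (1 - w\<^sup>2)))"
  have c1: "continuous_on {0..1} (\<lambda>w. v' (t * (1 - w\<^sup>2)))" using cont01[OF cv'] t0 by auto
  have c2: "continuous_on {0..1} (\<lambda>w. w\<^sup>2 *\<^sub>R v' (t * (1 - w\<^sup>2)))"
    using c1 by (intro continuous_intros) auto
  have c3: "continuous_on {0..1} (\<lambda>w. v (t * (1 - w\<^sup>2)))" using cont01[OF cv] t0 by auto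
  have hA: "((\<lambda>w. v' (t * (1 - w\<^sup>2))) has_integral A) {0..1}"
    unfolding A_def using c1 integrable_continuous_real by blast
  have hB: "((\<lambda>w. w\<^sup>2 *\<^sub>R v' (t * (1 - w\<^sup>2))) has_integral B) {0..1}"
    unfolding B_def using c2 integrable_continuous_real by blast
  have hK: "((\<lambda>w. v (t * (1 - w\<^sup>2))) has_integral K t) {0..1}"
    unfolding K_def using c3 integrable_continuous_real by blast
  have ftc: "((\<lambda>w. v (t * (1 - w\<^sup>2)) + w *\<^sub>R ((- 2 * t * w) *\<^sub>R v' (t * (1 - w\<^sup>2))))
      has_integral (1 *\<^sub>R v (t * (1 - 1\<^sup>2)) - 0 *\<^sub>R v (t * (1 - 0\<^sup>2)))) {0..1}"
  proof (rule fundamental_theorem_of_calculus[where f="\<lambda>w. w *\<^sub>R v (t * (1 - w\<^sup>2))"])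
    fix w :: real assume w: "w \<in> {0..1}"
    have "t * (1 - w\<^sup>2) \<in> {0..T}" using img01[of t T] t0 w by (auto simp: image_subset_iff)
    then have "((\<lambda>y. v (t * (1 - y\<^sup>2))) has_vector_derivative (- 2 * t * w) *\<^sub>R v' (t * (1 - w\<^sup>2))) (at w within {0..1})"
      by (intro chain_within[OF dv] img01) (auto intro!: derivative_eq_intros simp: t0 less_imp_le)
    then show "((\<lambda>w. w *\<^sub>R v (t * (1 - w\<^sup>2))) has_vector_derivative
        v (t * (1 - w\<^sup>2)) + w *\<^sub>R ((- 2 * t * w) *\<^sub>R v' (t * (1 - w\<^sup>2)))) (at w within {0..1})"
      by (auto intro!: derivative_eq_intros)
  qed simp
  have "((\<lambda>w. v (t * (1 - w\<^sup>2)) - (2 * t) *\<^sub>R (w\<^sup>2 *\<^sub>R v' (t * (1 - w\<^sup>2))))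
      has_integral (K t - (2 * t) *\<^sub>R B)) {0..1}"
    by (intro has_integral_diff hK has_integral_cmul hB)
  moreover have "((\<lambda>w. v (t * (1 - w\<^sup>2)) - (2 * t) *\<^sub>R (w\<^sup>2 *\<^sub>R v' (t * (1 - w\<^sup>2))))
      has_integral 0) {0..1}"
  proof -
    have fe: "v (t * (1 - w\<^sup>2)) + w *\<^sub>R ((- 2 * t * w) *\<^sub>R v' (t * (1 - w\<^sup>2)))
       = v (t * (1 - w\<^sup>2)) - (2 * t) *\<^sub>R (w\<^sup>2 *\<^sub>R v' (t * (1 - w\<^sup>2)))" for w
      by (simp add: scaleR_scaleR power2_eq_square algebra_simps)
    show ?thesis using ftc v0 unfolding fe by simp
  qed
  ultimately have "K t - (2 * t) *\<^sub>R B = 0" by (rule has_integral_unique)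
  then have KB: "K t = (2 * t) *\<^sub>R B" by simp
  have dK0: "((\<lambda>\<tau>. integral (cbox 0 1) (\<lambda>w. v (\<tau> * (1 - w\<^sup>2)))) has_vector_derivative integral (cbox 0 1) (\<lambda>w. (1 - w\<^sup>2) *\<^sub>R v' (t * (1 - w\<^sup>2))))
      (at t within {0..T})"
  proof (rule leibniz_rule_vector_derivative[where fx="\<lambda>\<tau> w. (1 - w\<^sup>2) *\<^sub>R v' (\<tau> * (1 - w\<^sup>2))"])
    fix \<tau> w :: real assume a: "\<tau> \<in> {0..T}" "w \<in> cbox 0 1"
    then have "\<tau> * (1 - w\<^sup>2) \<in> {0..T}" using img01[of \<tau> T] by (auto simp: image_subset_iff)
    then show "((\<lambda>x. v (x * (1 - w\<^sup>2))) has_vector_derivative (1 - w\<^sup>2) *\<^sub>R v' (\<tau> * (1 - w\<^sup>2))) (at \<tau> within {0..T})"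
    proof (rule chain_within[OF dv])
      show "(\<lambda>x. x * (1 - w\<^sup>2)) ` {0..T} \<subseteq> {0..T}"
      proof clarify
        fix y assume "y \<in> {0..T}"
        then show "y * (1 - w\<^sup>2) \<in> {0..T}" using img01[of y T] a by (auto simp: image_subset_iff)
      qed
    qed (auto intro!: derivative_eq_intros)
  next
    fix \<tau> assume "\<tau> \<in> {0..T}"
    then show "(\<lambda>w. v (\<tau> * (1 - w\<^sup>2))) integrable_on cbox 0 1"
      using cont01[OF cv] integrable_continuous_real by auto
  next
    have "continuous_on ({0..T} \<times> {0..1}) (\<lambda>p. v' (fst p * (1 - (snd p)\<^sup>2)))"
    proof (rule continuous_on_compose2[OF cv'])
      show "(\<lambda>p. fst p * (1 - (snd p)\<^sup>2)) ` ({0..T} \<times> {0..1}) \<subseteq> {0..T}"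
      proof clarify
        fix y w :: real assume "y \<in> {0..T}" "w \<in> {0..1}"
        then show "fst (y, w) * (1 - (snd (y, w))\<^sup>2) \<in> {0..T}"
          using img01[of y T] by (auto simp: image_subset_iff)
      qed
    qed (auto intro!: continuous_intros)
    then have "continuous_on ({0..T} \<times> {0..1}) (\<lambda>p. (1 - (snd p)\<^sup>2) *\<^sub>R v' (fst p * (1 - (snd p)\<^sup>2)))"
      by (intro continuous_intros)
    then show "continuous_on ({0..T} \<times> cbox 0 1) (\<lambda>(x, w). (1 - w\<^sup>2) *\<^sub>R v' (x * (1 - w\<^sup>2)))"
      by (simp add: split_beta cbox_interval)
  qed (use t0 in auto)
  have dK: "(K has_vector_derivative integral (cbox 0 1) (\<lambda>w. (1 - w\<^sup>2) *\<^sub>R v' (t * (1 - w\<^sup>2))))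
      (at t within {0..T})"
    using dK0 unfolding cbox_interval by (simp add: K_def[abs_def])
  have K2: "integral (cbox 0 1) (\<lambda>w. (1 - w\<^sup>2) *\<^sub>R v' (t * (1 - w\<^sup>2))) = A - B"
  proof -
    have "((\<lambda>w. v' (t * (1 - w\<^sup>2)) - w\<^sup>2 *\<^sub>R v' (t * (1 - w\<^sup>2))) has_integral A - B) {0..1}"
      by (intro has_integral_diff hA hB)
    then show ?thesis by (simp add: algebra_simps integral_unique)
  qed
  have dfull: "((\<lambda>\<tau>. (2 * sqrt \<tau> / sqrt pi) *\<^sub>R K \<tau>) has_vector_derivative
      ((2 * sqrt t / sqrt pi) *\<^sub>R (A - B) + (1 / (sqrt pi * sqrt t)) *\<^sub>R K t)) (at t within {0..T})"
  proof -
    have "(sqrt has_real_derivative inverse (sqrt t) / 2) (at t within {0..T})"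
      using DERIV_real_sqrt[of t] t0 has_field_derivative_at_within by blast
    then have "((\<lambda>\<tau>. 2 * sqrt \<tau> / sqrt pi) has_real_derivative (2 * (inverse (sqrt t) / 2) / sqrt pi)) (at t within {0..T})"
      by (intro DERIV_cdivide DERIV_cmult)
    moreover have "2 * (inverse (sqrt t) / 2) / sqrt pi = 1 / (sqrt pi * sqrt t)"
      by (simp add: field_simps)
    ultimately have ds: "((\<lambda>\<tau>. 2 * sqrt \<tau> / sqrt pi) has_real_derivative 1 / (sqrt pi * sqrt t)) (at t within {0..T})"
      by simp
    show ?thesis using has_vector_derivative_scaleR[OF ds dK] unfolding K2 by simp
  qed
  have eqv: "(2 * sqrt t / sqrt pi) *\<^sub>R (A - B) + (1 / (sqrt pi * sqrt t)) *\<^sub>R K t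
      = (2 * sqrt t / sqrt pi) *\<^sub>R A"
  proof -
    have "(1 / (sqrt pi * sqrt t)) *\<^sub>R K t = (2 * sqrt t / sqrt pi) *\<^sub>R B"
      unfolding KB scaleR_scaleR
    proof (rule arg_cong[where f="\<lambda>c. c *\<^sub>R B"])
      have "sqrt t * sqrt t = t" using t0 by simp
      then show "1 / (sqrt pi * sqrt t) * (2 * t) = 2 * sqrt t / sqrt pi"
        using t0 by (simp add: field_simps)
    qed
    then show ?thesis by (simp add: algebra_simps)
  qed
  have "(frac_int_half v has_vector_derivative (2 * sqrt t / sqrt pi) *\<^sub>R A) (at t within {0..T})"
    using has_vector_derivative_transform[OF _ _ dfull[unfolded eqv]] repall t0 by auto
  then have "frac_deriv_half T v t = (2 * sqrt t / sqrt pi) *\<^sub>R A"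
    unfolding frac_deriv_half_def
    using vector_derivative_within_cbox[of 0 T t, unfolded cbox_interval] T t0 by auto
  also have "\<dots> = frac_int_half v' t"
    unfolding A_def using rep[of t v'] t0 continuous_on_subset[OF cv'] by auto
  finally show ?thesis .
qed

lemma cslice:
  fixes F :: "real \<Rightarrow> real \<Rightarrow> complex"
  assumes c: "continuous_on (S \<times> {0..T}) (\<lambda>(z, s). F z s)" and t: "0 \<le> t" "t \<le> T"
  shows "continuous_on (S \<times> {0..1}) (\<lambda>(z, w). F z (t * (1 - w\<^sup>2)))"
proof -
  have "continuous_on (S \<times> {0..1}) ((\<lambda>(z, s). F z s) \<circ> (\<lambda>p. (fst p, t * (1 - (snd p)\<^sup>2))))"
  proof (rule continuous_on_compose)
    show "continuous_on (S \<times> {0..1}) (\<lambda>p. (fst p, t * (1 - (snd p)\<^sup>2)))"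
      by (auto intro!: continuous_intros)
    have "(\<lambda>p. (fst p, t * (1 - (snd p)\<^sup>2))) ` (S \<times> {0..1}) \<subseteq> S \<times> {0..T}"
      using img01[OF t] by (auto simp: image_subset_iff)
    then show "continuous_on ((\<lambda>p. (fst p, t * (1 - (snd p)\<^sup>2))) ` (S \<times> {0..1})) (\<lambda>(z, s). F z s)"
      using continuous_on_subset[OF c] by blast
  qed
  then show ?thesis by (simp add: o_def split_beta)
qed

lemma cslice1:
  fixes F :: "real \<Rightarrow> real \<Rightarrow> complex"
  assumes c: "continuous_on (S \<times> U) (\<lambda>(z, s). F z s)" and z: "z \<in> S"
  shows "continuous_on U (F z)"
proof -
  have "continuous_on U ((\<lambda>(z, s). F z s) \<circ> (\<lambda>s. (z, s)))"
  proof (rule continuous_on_compose)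
    show "continuous_on U (\<lambda>s. (z, s))" by (auto intro!: continuous_intros)
    show "continuous_on ((\<lambda>s. (z, s)) ` U) (\<lambda>(z, s). F z s)"
      using continuous_on_subset[OF c] z by blast
  qed
  then show ?thesis by (simp add: o_def)
qed

lemma dint:
  fixes p p1 :: "real \<Rightarrow> real \<Rightarrow> complex"
  assumes t: "t \<in> {0<..T}"
    and dp: "\<And>z s. z \<in> {a..b} \<Longrightarrow> s \<in> {0..T} \<Longrightarrow>
       ((\<lambda>z. p z s) has_vector_derivative p1 z s) (at z within {a..b})"
    and cp: "continuous_on ({a..b} \<times> {0..T}) (\<lambda>(z, s). p z s)"
    and cp1: "continuous_on ({a..b} \<times> {0..T}) (\<lambda>(z, s). p1 z s)"
    and z0: "z0 \<in> {a..b}"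
  shows "((\<lambda>z. frac_int_half (p z) t) has_vector_derivative frac_int_half (p1 z0) t) (at z0 within {a..b})"
proof -
  have t0: "0 < t" "t \<le> T" using t by auto
  have repz: "frac_int_half (q z) t = (2 * sqrt t / sqrt pi) *\<^sub>R integral (cbox 0 1) (\<lambda>w. q z (t * (1 - w\<^sup>2)))"
    if "z \<in> {a..b}" and cq: "continuous_on ({a..b} \<times> {0..T}) (\<lambda>(z, s). q z s)"
    for z and q :: "real \<Rightarrow> real \<Rightarrow> complex"
  proof -
    have "continuous_on {0..T} (q z)" by (rule cslice1[OF cq that(1)])
    then have "continuous_on {0..t} (q z)" by (rule continuous_on_subset) (use t0 in auto)
    then show ?thesis using rep[of t "q z"] t0 by (simp add: cbox_interval)
  qed
  have L: "((\<lambda>z. integral (cbox 0 1) (\<lambda>w. p z (t * (1 - w\<^sup>2)))) has_vector_derivative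
      integral (cbox 0 1) (\<lambda>w. p1 z0 (t * (1 - w\<^sup>2)))) (at z0 within {a..b})"
  proof (rule leibniz_rule_vector_derivative[where fx="\<lambda>z w. p1 z (t * (1 - w\<^sup>2))"])
    fix z w :: real assume a: "z \<in> {a..b}" "w \<in> cbox 0 1"
    then have "t * (1 - w\<^sup>2) \<in> {0..T}" using img01[of t T] t0 by (auto simp: image_subset_iff)
    then show "((\<lambda>z. p z (t * (1 - w\<^sup>2))) has_vector_derivative p1 z (t * (1 - w\<^sup>2))) (at z within {a..b})"
      using dp a by blast
  next
    fix z assume "z \<in> {a..b}"
    then have "continuous_on {0..T} (p z)" by (rule cslice1[OF cp])
    then show "(\<lambda>w. p z (t * (1 - w\<^sup>2))) integrable_on cbox 0 1"
      using cont01[of T "p z" t] t0 integrable_continuous_real by (auto simp: cbox_interval)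
  next
    show "continuous_on ({a..b} \<times> cbox 0 1) (\<lambda>(z, w). p1 z (t * (1 - w\<^sup>2)))"
      using cslice[OF cp1, of t] t0 by (simp add: cbox_interval)
  qed (use z0 in auto)
  have "((\<lambda>z. (2 * sqrt t / sqrt pi) *\<^sub>R integral (cbox 0 1) (\<lambda>w. p z (t * (1 - w\<^sup>2)))) has_vector_derivative
      (2 * sqrt t / sqrt pi) *\<^sub>R integral (cbox 0 1) (\<lambda>w. p1 z0 (t * (1 - w\<^sup>2)))) (at z0 within {a..b})"
    using has_vector_derivative_scaleR[OF DERIV_const L] by simp
  then have "((\<lambda>z. frac_int_half (p z) t) has_vector_derivative
      (2 * sqrt t / sqrt pi) *\<^sub>R integral (cbox 0 1) (\<lambda>w. p1 z0 (t * (1 - w\<^sup>2)))) (at z0 within {a..b})"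
    by (rule has_vector_derivative_transform[rotated 2]) (use z0 repz[OF _ cp] in auto)
  then show ?thesis using repz[OF z0 cp1] by simp
qed

lemma spaceder:
  fixes p p1 p11 :: "real \<Rightarrow> real \<Rightarrow> complex"
  assumes ab: "a < b" and t: "t \<in> {0<..T}"
    and dp: "\<And>z s. z \<in> {a..b} \<Longrightarrow> s \<in> {0..T} \<Longrightarrow>
       ((\<lambda>z. p z s) has_vector_derivative p1 z s) (at z within {a..b})"
    and dp1: "\<And>z s. z \<in> {a..b} \<Longrightarrow> s \<in> {0..T} \<Longrightarrow>
       ((\<lambda>z. p1 z s) has_vector_derivative p11 z s) (at z within {a..b})"
    and cp: "continuous_on ({a..b} \<times> {0..T}) (\<lambda>(z, s). p z s)"
    and cp1: "continuous_on ({a..b} \<times> {0..T}) (\<lambda>(z, s). p1 z s)"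
    and cp11: "continuous_on ({a..b} \<times> {0..T}) (\<lambda>(z, s). p11 z s)"
    and z0: "z0 \<in> {a..b}"
  shows "d2_within {a..b} (\<lambda>z. frac_int_half (\<lambda>s. p z s) t) z0 = frac_int_half (\<lambda>s. p11 z0 s) t"
proof -
  have v1: "vector_derivative (\<lambda>z. frac_int_half (p z) t) (at z within {a..b}) = frac_int_half (p1 z) t"
    if "z \<in> {a..b}" for z
    using vector_derivative_within_cbox[of a b z, unfolded cbox_interval, OF ab that dint[OF t dp cp cp1 that]] .
  have "((\<lambda>z. vector_derivative (\<lambda>z. frac_int_half (p z) t) (at z within {a..b})) has_vector_derivative
      frac_int_half (p11 z0) t) (at z0 within {a..b})"
    by (rule has_vector_derivative_transform[rotated 2, OF dint[OF t dp1 cp1 cp11 z0]]) (use z0 v1 in auto)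
  then have "vector_derivative (\<lambda>z. vector_derivative (\<lambda>z. frac_int_half (p z) t) (at z within {a..b}))
      (at z0 within {a..b}) = frac_int_half (p11 z0) t"
    by (rule vector_derivative_within_cbox[of a b z0, unfolded cbox_interval, OF ab z0])
  then show ?thesis by (simp add: d2_within_def)
qed

lemma gen: fixes e m j :: complex assumes "e * e = j" "m * e = 1" "j * j = -1" shows "j * e = - m"
proof -
  have "j * e = j * e * (m * e)" using assms by simp
  also have "\<dots> = m * j * (e * e)" by (simp add: algebra_simps)
  also have "\<dots> = - m" using assms by (simp add: mult.assoc)
  finally show ?thesis .
qed
lemma Eprop: "\<i> * exp (\<i> * of_real pi / 4) = - exp (- \<i> * of_real pi / 4)"
proof (rule gen)
  have "exp (\<i> * of_real pi / 4) * exp (\<i> * of_real pi / 4) = exp (\<i> * of_real (pi / 2))"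
    by (simp add: exp_add[symmetric] field_simps)
  also have "\<dots> = cis (pi / 2)" by (simp add: cis_conv_exp)
  finally show "exp (\<i> * of_real pi / 4) * exp (\<i> * of_real pi / 4) = \<i>" by simp
  show "exp (- \<i> * of_real pi / 4) * exp (\<i> * of_real pi / 4) = 1"
    by (simp add: exp_minus)
qed simp
lemma corner_alg:
  fixes U1 U2 D a b e m :: complex
  assumes h1: "U1 + m * D - (1/2) * e * a = 0"
    and h2: "U2 + m * D - (1/2) * e * b = 0"
    and k: "a + b = - \<i> * D" and E: "\<i> * e = - m"
  shows "U1 + U2 + (3/2) * m * D = 0"
proof -
  have "U1 + U2 + (3/2) * m * D = (U1 + m * D - (1/2) * e * a) + (U2 + m * D - (1/2) * e * b)
     + (1/2) * e * (a + b + \<i> * D) - (1/2) * D * (\<i> * e + m)"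
    by (simp add: field_simps)
  also have "\<dots> = 0" by (simp only: h1 h2 k E) simp
  finally show ?thesis .
qed

lemma sumrep:
  fixes f1 f2 g :: "real \<Rightarrow> complex" and c :: complex
  assumes cf1: "continuous_on {0..T} f1" and cf2: "continuous_on {0..T} f2"
    and cg: "continuous_on {0..T} g"
    and eq: "\<And>s. s \<in> {0<..T} \<Longrightarrow> f1 s + f2 s = c * g s" and t: "t \<in> {0<..T}"
  shows "frac_int_half f1 t + frac_int_half f2 t = c * frac_int_half g t"
proof -
  have t0: "0 < t" "t \<le> T" using t by auto
  have r: "frac_int_half f t = (2 * sqrt t / sqrt pi) *\<^sub>R integral {0..1} (\<lambda>w. f (t * (1 - w\<^sup>2)))"
    if "continuous_on {0..T} f" for f :: "real \<Rightarrow> complex"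
    using rep[of t f] t0 continuous_on_subset[OF that, of "{0..t}"] by auto
  have i: "(\<lambda>w. f (t * (1 - w\<^sup>2))) integrable_on {0..1}"
    if "continuous_on {0..T} f" for f :: "real \<Rightarrow> complex"
    using cont01[OF that, of t] t0 integrable_continuous_real by auto
  have "integral {0..1} (\<lambda>w. f1 (t * (1 - w\<^sup>2))) + integral {0..1} (\<lambda>w. f2 (t * (1 - w\<^sup>2)))
      = integral {0..1} (\<lambda>w. f1 (t * (1 - w\<^sup>2)) + f2 (t * (1 - w\<^sup>2)))"
    by (rule integral_add[symmetric, OF i[OF cf1] i[OF cf2]])
  also have "\<dots> = integral {0..1} (\<lambda>w. c * g (t * (1 - w\<^sup>2)))"
  proof (rule integral_spike[where S="{1}"])
    fix w :: real assume w: "w \<in> {0..1} - {1}"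
    then have "w\<^sup>2 < 1" by (auto simp: power_less_one_iff abs_square_less_1)
    then have "t * (1 - w\<^sup>2) > 0" using t0 by simp
    moreover have "t * (1 - w\<^sup>2) \<le> T" using img01[of t T] t0 w by (auto simp: image_subset_iff)
    ultimately show "c * g (t * (1 - w\<^sup>2)) = f1 (t * (1 - w\<^sup>2)) + f2 (t * (1 - w\<^sup>2))"
      using eq by simp
  qed simp
  also have "\<dots> = c * integral {0..1} (\<lambda>w. g (t * (1 - w\<^sup>2)))" by simp
  finally have I: "integral {0..1} (\<lambda>w. f1 (t * (1 - w\<^sup>2))) + integral {0..1} (\<lambda>w. f2 (t * (1 - w\<^sup>2)))
      = c * integral {0..1} (\<lambda>w. g (t * (1 - w\<^sup>2)))" .
  show ?thesis
    unfolding r[OF cf1] r[OF cf2] r[OF cg] scaleR_right_distrib[symmetric] I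
    by (simp add: scaleR_conv_of_real algebra_simps)
qed

lemma slice_y:
  fixes f :: "real \<Rightarrow> real \<Rightarrow> real \<Rightarrow> complex"
  assumes "continuous_on (X \<times> Y \<times> U) (\<lambda>(x, y, t). f x y t)" "x0 \<in> X"
  shows "continuous_on (Y \<times> U) (\<lambda>(z, s). f x0 z s)"
proof -
  have "continuous_on (Y \<times> U) ((\<lambda>(x, y, t). f x y t) \<circ> (\<lambda>p. (x0, fst p, snd p)))"
    by (rule continuous_on_compose, auto intro!: continuous_intros continuous_on_subset[OF assms(1)] simp: assms(2))
  then show ?thesis by (simp add: o_def split_beta)
qed

lemma slice_x:
  fixes f :: "real \<Rightarrow> real \<Rightarrow> real \<Rightarrow> complex"
  assumes "continuous_on (X \<times> Y \<times> U) (\<lambda>(x, y, t). f x y t)" "y0 \<in> Y"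
  shows "continuous_on (X \<times> U) (\<lambda>(z, s). f z y0 s)"
proof -
  have "continuous_on (X \<times> U) ((\<lambda>(x, y, t). f x y t) \<circ> (\<lambda>p. (fst p, y0, snd p)))"
    by (rule continuous_on_compose, auto intro!: continuous_intros continuous_on_subset[OF assms(1)] simp: assms(2))
  then show ?thesis by (simp add: o_def split_beta)
qed

lemma slice_t:
  fixes f :: "real \<Rightarrow> real \<Rightarrow> real \<Rightarrow> complex"
  assumes "continuous_on (X \<times> Y \<times> U) (\<lambda>(x, y, t). f x y t)" "x0 \<in> X" "y0 \<in> Y"
  shows "continuous_on U (f x0 y0)"
proof -
  have "continuous_on U ((\<lambda>(x, y, t). f x y t) \<circ> (\<lambda>s. (x0, y0, s)))"
    by (rule continuous_on_compose, auto intro!: continuous_intros continuous_on_subset[OF assms(1)] simp: assms(2,3))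
  then show ?thesis by (simp add: o_def)
qed


theorem mainTheorem2:
  fixes xl xr xb xt T :: real
    and u u1 u2 u11 u12 u21 u22 ut :: "real \<Rightarrow> real \<Rightarrow> real \<Rightarrow> complex"
  assumes dom: "xl < xr" "xb < xt" "T > 0"
    and d_u1: "\<And>x y t. x \<in> {xl..xr} \<Longrightarrow> y \<in> {xb..xt} \<Longrightarrow> t \<in> {0..T} \<Longrightarrow>
              ((\<lambda>s. u s y t) has_vector_derivative u1 x y t) (at x within {xl..xr})"
    and d_u2: "\<And>x y t. x \<in> {xl..xr} \<Longrightarrow> y \<in> {xb..xt} \<Longrightarrow> t \<in> {0..T} \<Longrightarrow>
              ((\<lambda>s. u x s t) has_vector_derivative u2 x y t) (at y within {xb..xt})"
    and d_u11: "\<And>x y t. x \<in> {xl..xr} \<Longrightarrow> y \<in> {xb..xt} \<Longrightarrow> t \<in> {0..T} \<Longrightarrow>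
              ((\<lambda>s. u1 s y t) has_vector_derivative u11 x y t) (at x within {xl..xr})"
    and d_u12: "\<And>x y t. x \<in> {xl..xr} \<Longrightarrow> y \<in> {xb..xt} \<Longrightarrow> t \<in> {0..T} \<Longrightarrow>
              ((\<lambda>s. u1 x s t) has_vector_derivative u12 x y t) (at y within {xb..xt})"
    and d_u21: "\<And>x y t. x \<in> {xl..xr} \<Longrightarrow> y \<in> {xb..xt} \<Longrightarrow> t \<in> {0..T} \<Longrightarrow>
              ((\<lambda>s. u2 s y t) has_vector_derivative u21 x y t) (at x within {xl..xr})"
    and d_u22: "\<And>x y t. x \<in> {xl..xr} \<Longrightarrow> y \<in> {xb..xt} \<Longrightarrow> t \<in> {0..T} \<Longrightarrow>
              ((\<lambda>s. u2 x s t) has_vector_derivative u22 x y t) (at y within {xb..xt})"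
    and d_ut: "\<And>x y t. x \<in> {xl..xr} \<Longrightarrow> y \<in> {xb..xt} \<Longrightarrow> t \<in> {0..T} \<Longrightarrow>
              ((\<lambda>s. u x y s) has_vector_derivative ut x y t) (at t within {0..T})"
    and cont: "\<And>f. f \<in> {u, u1, u2, u11, u12, u21, u22, ut} \<Longrightarrow>
              continuous_on ({xl..xr} \<times> {xb..xt} \<times> {0..T}) (\<lambda>(x, y, t). f x y t)"
    and init: "\<And>x y. (x \<in> {xl, xr} \<and> y \<in> {xb..xt}) \<or> (x \<in> {xl..xr} \<and> y \<in> {xb, xt})
              \<Longrightarrow> u x y 0 = 0"
    and pde: "\<And>x y t. x \<in> {xl..xr} \<Longrightarrow> y \<in> {xb..xt} \<Longrightarrow> t \<in> {0<..T} \<Longrightarrow>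
              \<i> * ut x y t + u11 x y t + u22 x y t = 0"
    and bc_l: "\<And>y t. y \<in> {xb..xt} \<Longrightarrow> t \<in> {0<..T} \<Longrightarrow>
              - u1 xl y t + exp (- \<i> * of_real pi / 4) * frac_deriv_half T (\<lambda>s. u xl y s) t
              - (1/2) * exp (\<i> * of_real pi / 4)
                  * d2_within {xb..xt} (\<lambda>z. frac_int_half (\<lambda>s. u xl z s) t) y = 0"
    and bc_r: "\<And>y t. y \<in> {xb..xt} \<Longrightarrow> t \<in> {0<..T} \<Longrightarrow>
              u1 xr y t + exp (- \<i> * of_real pi / 4) * frac_deriv_half T (\<lambda>s. u xr y s) t
              - (1/2) * exp (\<i> * of_real pi / 4)
                  * d2_within {xb..xt} (\<lambda>z. frac_int_half (\<lambda>s. u xr z s) t) y = 0"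
    and bc_b: "\<And>x t. x \<in> {xl..xr} \<Longrightarrow> t \<in> {0<..T} \<Longrightarrow>
              - u2 x xb t + exp (- \<i> * of_real pi / 4) * frac_deriv_half T (\<lambda>s. u x xb s) t
              - (1/2) * exp (\<i> * of_real pi / 4)
                  * d2_within {xl..xr} (\<lambda>z. frac_int_half (\<lambda>s. u z xb s) t) x = 0"
    and bc_t: "\<And>x t. x \<in> {xl..xr} \<Longrightarrow> t \<in> {0<..T} \<Longrightarrow>
              u2 x xt t + exp (- \<i> * of_real pi / 4) * frac_deriv_half T (\<lambda>s. u x xt s) t
              - (1/2) * exp (\<i> * of_real pi / 4)
                  * d2_within {xl..xr} (\<lambda>z. frac_int_half (\<lambda>s. u z xt s) t) x = 0"
  shows "\<forall>t \<in> {0<..T}.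
           (- u1 xl xb t - u2 xl xb t
              + (3/2) * exp (- \<i> * of_real pi / 4) * frac_deriv_half T (\<lambda>s. u xl xb s) t = 0)
         \<and> (- u1 xl xt t + u2 xl xt t
              + (3/2) * exp (- \<i> * of_real pi / 4) * frac_deriv_half T (\<lambda>s. u xl xt s) t = 0)
         \<and> (u1 xr xb t - u2 xr xb t
              + (3/2) * exp (- \<i> * of_real pi / 4) * frac_deriv_half T (\<lambda>s. u xr xb s) t = 0)
         \<and> (u1 xr xt t + u2 xr xt t
              + (3/2) * exp (- \<i> * of_real pi / 4) * frac_deriv_half T (\<lambda>s. u xr xt s) t = 0)"
  proof -
  have cu: "continuous_on ({xl..xr} \<times> {xb..xt} \<times> {0..T}) (\<lambda>(x, y, t). u x y t)" by (rule cont) simp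
  have cu1: "continuous_on ({xl..xr} \<times> {xb..xt} \<times> {0..T}) (\<lambda>(x, y, t). u1 x y t)" by (rule cont) simp
  have cu2: "continuous_on ({xl..xr} \<times> {xb..xt} \<times> {0..T}) (\<lambda>(x, y, t). u2 x y t)" by (rule cont) simp
  have cu11: "continuous_on ({xl..xr} \<times> {xb..xt} \<times> {0..T}) (\<lambda>(x, y, t). u11 x y t)" by (rule cont) simp
  have cu22: "continuous_on ({xl..xr} \<times> {xb..xt} \<times> {0..T}) (\<lambda>(x, y, t). u22 x y t)" by (rule cont) simp
  have cut: "continuous_on ({xl..xr} \<times> {xb..xt} \<times> {0..T}) (\<lambda>(x, y, t). ut x y t)" by (rule cont) simp
  have key: "d2_within {xb..xt} (\<lambda>z. frac_int_half (\<lambda>s. u x0 z s) t) y0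
      + d2_within {xl..xr} (\<lambda>z. frac_int_half (\<lambda>s. u z y0 s) t) x0
      = - \<i> * frac_deriv_half T (\<lambda>s. u x0 y0 s) t"
    if hx: "x0 \<in> {xl..xr}" and hy: "y0 \<in> {xb..xt}" and ht: "t \<in> {0<..T}" and h0: "u x0 y0 0 = 0"
    for x0 y0 t
  proof -
    have a1: "d2_within {xb..xt} (\<lambda>z. frac_int_half (\<lambda>s. u x0 z s) t) y0 = frac_int_half (\<lambda>s. u22 x0 y0 s) t"
      by (rule spaceder[OF dom(2) ht d_u2[OF hx] d_u22[OF hx] slice_y[OF cu hx] slice_y[OF cu2 hx] slice_y[OF cu22 hx] hy])
    have a2: "d2_within {xl..xr} (\<lambda>z. frac_int_half (\<lambda>s. u z y0 s) t) x0 = frac_int_half (\<lambda>s. u11 x0 y0 s) t"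
      by (rule spaceder[OF dom(1) ht d_u1[OF _ hy] d_u11[OF _ hy] slice_x[OF cu hy] slice_x[OF cu1 hy] slice_x[OF cu11 hy] hx])
    have a3: "frac_deriv_half T (\<lambda>s. u x0 y0 s) t = frac_int_half (\<lambda>s. ut x0 y0 s) t"
      by (rule timeder[OF dom(3) d_ut[OF hx hy] slice_t[OF cut hx hy] h0 ht])
    have a4: "frac_int_half (u11 x0 y0) t + frac_int_half (u22 x0 y0) t = - \<i> * frac_int_half (ut x0 y0) t"
    proof (rule sumrep[OF slice_t[OF cu11 hx hy] slice_t[OF cu22 hx hy] slice_t[OF cut hx hy] _ ht])
      fix s assume hs: "s \<in> {0<..T}"
      have "u11 x0 y0 s + u22 x0 y0 s = (\<i> * ut x0 y0 s + u11 x0 y0 s + u22 x0 y0 s) - \<i> * ut x0 y0 s"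
        by simp
      also have "\<dots> = - \<i> * ut x0 y0 s" using pde[OF hx hy hs] by simp
      finally show "u11 x0 y0 s + u22 x0 y0 s = - \<i> * ut x0 y0 s" .
    qed
    show ?thesis unfolding a1 a2 a3 using a4 by (simp add: add.commute)
  qed
  show ?thesis
  proof (intro ballI conjI)
    fix t assume ht: "t \<in> {0<..T}"
    have l: "xl \<in> {xl..xr}" "xr \<in> {xl..xr}" and b: "xb \<in> {xb..xt}" "xt \<in> {xb..xt}" using dom by auto
    have z: "u xl xb 0 = 0" "u xl xt 0 = 0" "u xr xb 0 = 0" "u xr xt 0 = 0"
      by (rule init, use dom in auto)+
    show "- u1 xl xb t - u2 xl xb t
              + (3/2) * exp (- \<i> * of_real pi / 4) * frac_deriv_half T (\<lambda>s. u xl xb s) t = 0"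
      using corner_alg[OF bc_l[OF b(1) ht] bc_b[OF l(1) ht] key[OF l(1) b(1) ht z(1)] Eprop] by simp
    show "- u1 xl xt t + u2 xl xt t
              + (3/2) * exp (- \<i> * of_real pi / 4) * frac_deriv_half T (\<lambda>s. u xl xt s) t = 0"
      using corner_alg[OF bc_l[OF b(2) ht] bc_t[OF l(1) ht] key[OF l(1) b(2) ht z(2)] Eprop] by simp
    show "u1 xr xb t - u2 xr xb t
              + (3/2) * exp (- \<i> * of_real pi / 4) * frac_deriv_half T (\<lambda>s. u xr xb s) t = 0"
      using corner_alg[OF bc_r[OF b(1) ht] bc_b[OF l(2) ht] key[OF l(2) b(1) ht z(3)] Eprop] by simp
    show "u1 xr xt t + u2 xr xt t
              + (3/2) * exp (- \<i> * of_real pi / 4) * frac_deriv_half T (\<lambda>s. u xr xt s) t = 0"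
      using corner_alg[OF bc_r[OF b(2) ht] bc_t[OF l(2) ht] key[OF l(2) b(2) ht z(4)] Eprop] by simp
  qed
qed

end
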